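(* Let the setting, algorithm and $M_1$ be as in the context, and suppose $c_k\le1$ for all $k$. Then for all $k\ge0$, $$\|\mathbf g^k\|\le\|\mathbf g^k-\mathbf W^\infty\mathbf g^k\|+L_1\|\mathbf x^k-\mathbf W^\infty\mathbf x^k\|+\sqrt n\|\nabla F(\bar x^k)\|.$$ Moreover, if for some $k_0\ge0$ it holds that $M_1I_d\preceq H_i^{k_0}+MI_d\preceq M_2I_d$ for all $i$, then $$\|\mathbf x^{k_0+1}-\mathbf x^{k_0}\|\le\Big(2+\frac{2\alpha L_1}{M_1}\Big)\|\mathbf x^{k_0}-\mathbf W^\infty\mathbf x^{k_0}\|+\frac{2\alpha}{M_1}\|\mathbf g^{k_0}-\mathbf W^\infty\mathbf g^{k_0}\|+\frac{2\alpha\sqrt n}{M_1}\|\nabla F(\bar x^{k_0})\|.$$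
   Context: Setting. $n,d\ge1$; $W\in\mathbb{R}^{n\times n}$ is entrywise nonnegative, symmetric, $W1_n=1_n$, with $w_{ij}=0$ iff $j$ is neither $i$ nor a neighbor of $i$ in an undirected connected graph; $\sigma=\|W-\frac1n1_n1_n^T\|<1$. Each $f_i:\mathbb{R}^d\to\mathbb{R}$ is $C^2$ with $L_1$-Lipschitz gradient and $L_2$-Lipschitz Hessian; $F=\frac1n\sum_if_i$ with $\nabla^2F\succeq\mu I_d$, $\mu>0$, minimizer $x^*$. $\mathcal Q:\mathbb{R}^{d\times d}\to\mathbb{R}^{d\times d}$ deterministic with $\|\mathcal Q(A)-A\|_F\le(1-\delta)\|A\|_F$, $\delta\in(0,1]$, applied blockwise. Notation: $\mathbf x=[x_1;\dots;x_n]$, $\bar x=\frac1n\sum x_i$; $\mathbf H=[H_1;\dots;H_n]$; $\mathbf W=W\otimes I_d$, $\mathbf W^\infty=\frac1n1_n1_n^T\otimes I_d$; $\nabla f(\mathbf x)=[\nabla f_i(x_i)]_i$, $\nabla^2 f(\mathbf x)=[\nabla^2f_i(x_i)]_i$. Algorithm: arbitrary $\mathbf x^0$, $g_i^0=\nabla f_i(x_i^0)$, $H_i^0=\nabla^2 f_i(x_i^0)$, arbitrary $\mathbf E^0,\tilde{\mathbf H}^0$, $\alpha,\gamma>0$, integer $m\ge1$, $M\ge0$, $c_k\in[0,1]$; for $k\ge0$: $\mathbf x^{k+1}=\mathbf W^m(\mathbf x^k-\alpha\mathbf d^k)$; $\mathbf g^{k+1}=\mathbf W^m(\mathbf g^k+\nabla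 f(\mathbf x^{k+1})-\nabla f(\mathbf x^k))$; $\mathbf E^{k+1}=\mathbf E^k+\mathbf H^k-\tilde{\mathbf H}^k-\mathcal Q(\mathbf E^k+\mathbf H^k-\tilde{\mathbf H}^k)$; $\tilde{\mathbf H}^{k+1}=\tilde{\mathbf H}^k+\mathcal Q(\mathbf H^k-\tilde{\mathbf H}^k)$; $\hat{\mathbf H}^k=\tilde{\mathbf H}^k+\mathcal Q(\mathbf E^k+\mathbf H^k-\tilde{\mathbf H}^k)$; $\mathbf H^{k+1}=\mathbf H^k-\gamma(I_{nd}-\mathbf W)\hat{\mathbf H}^k+\nabla^2f(\mathbf x^{k+1})-\nabla^2f(\mathbf x^k)$; $\mathbf d^k$ satisfies $(\mathrm{diag}\{H_i^k\}+MI_{nd})\mathbf d^k=\mathbf g^k+\mathbf r^k$, $\|\mathbf r^k\|\le c_k\|\mathbf g^k\|$. Constants: $u_1^0=\|\mathbf x^0-\mathbf W^\infty\mathbf x^0\|^2+\frac{(1-\sigma^2)^2}{50L_1^2}\|\mathbf g^0-\mathbf W^\infty\mathbf g^0\|^2+2\sigma^{m-1}\frac n{L_1}(F(\bar x^0)-F(x^* ))$; $u_2^0=\frac{\delta(1-\sigma)}{8(1-\delta)}\|\mathbf E^0\|_F+\frac{1-\sigma}4\|\mathbf H^0-\tilde{\mathbf H}^0\|_F+\|\mathbf H^0-\mathbf W^\infty\mathbf H^0\|_F$; $C=\frac{3.75L_2\sqrt{\sigma^{-(m-1)}u_1^0}}{\sqrt{1-\mu\alpha/(2M_2)}-(1-\gamma(1-\sigma)/2)}$;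 $\tilde u_2^0=\max\{u_2^0-C,C\}$; $M_1=\mu+M-L_2\sqrt{u_1^0/n}-\tilde u_2^0$; $M_2=L_1+M+L_2\sqrt{u_1^0/n}+\tilde u_2^0$ (assumed $M_2\ge M_1>0$). *)

theory Defs
  imports "HOL-Analysis.Analysis"
begin

text \<open>Agents are indexed by a finite type 'n (n = CARD('n)), coordinates by a finite
type 'd (d = CARD('d)).  A stacked vector [x_1;...;x_n] is an element of real^'d^'n,
whose norm is exactly the Euclidean norm of the stacked vector.  A stacked matrix
[H_1;...;H_n] is an element of real^'d^'d^'n, whose norm is exactly the Frobenius norm.\<close>

primrec matpow :: "real^'n^'n \<Rightarrow> nat \<Rightarrow> real^'n^'n" where
  "matpow W 0 = mat 1"
| "matpow W (Suc k) = matpow W k ** W"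

text \<open>Blockwise action of (A kron I): (A kron I) x, for stacked vectors or stacked matrices.\<close>
definition bmul :: "real^'n^'n \<Rightarrow> ('a::real_vector)^'n \<Rightarrow> 'a^'n" where
  "bmul A x = (\<chi> i. \<Sum>j\<in>UNIV. (A $ i $ j) *\<^sub>R (x $ j))"

text \<open>Average of the blocks, and W-infinity = (1/n) 1 1^T kron I.\<close>
definition avg :: "('a::real_vector)^'n \<Rightarrow> 'a" where
  "avg x = (1 / real CARD('n)) *\<^sub>R (\<Sum>i\<in>UNIV. x $ i)"

definition Winf :: "('a::real_vector)^'n \<Rightarrow> 'a^'n" where
  "Winf x = (\<chi> i. avg x)"

definition Jmat :: "real^'n^'n" where
  "Jmat = (\<chi> i j. 1 / real CARD('n))"

definition loewner_le :: "real^'d^'d \<Rightarrow> real^'d^'d \<Rightarrow> bool" where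
  "loewner_le A B \<longleftrightarrow> (\<forall>v. v \<bullet> (A *v v) \<le> v \<bullet> (B *v v))"

definition mixing_matrix :: "real^'n^'n \<Rightarrow> bool" where
  "mixing_matrix W \<longleftrightarrow>
     (\<forall>i j. W $ i $ j \<ge> 0) \<and> (\<forall>i j. W $ i $ j = W $ j $ i) \<and>
     (\<forall>i. (\<Sum>j\<in>UNIV. W $ i $ j) = 1) \<and>
     (\<exists>E :: 'n \<Rightarrow> 'n \<Rightarrow> bool.
        (\<forall>i j. E i j \<longleftrightarrow> E j i) \<and> (\<forall>i. \<not> E i i) \<and> (\<forall>i j. E\<^sup>*\<^sup>* i j) \<and>
        (\<forall>i j. W $ i $ j = 0 \<longleftrightarrow> (j \<noteq> i \<and> \<not> E i j)))"

end

theory Submission imports Defs begin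

definition dstoch :: "real^'n^'n \<Rightarrow> bool" where
  "dstoch A \<longleftrightarrow> (\<forall>i j. A $ i $ j \<ge> 0) \<and> (\<forall>i. (\<Sum>j\<in>UNIV. A $ i $ j) = 1) \<and> (\<forall>j. (\<Sum>i\<in>UNIV. A $ i $ j) = 1)"

lemma norm_sq_vec: "(norm (v::('a::real_normed_vector)^'n))\<^sup>2 = (\<Sum>i\<in>UNIV. (norm (v $ i))\<^sup>2)"
  by (simp add: norm_vec_def L2_set_def sum_nonneg)

lemma jensen_w:
  fixes w t :: "'n \<Rightarrow> real"
  assumes "\<And>j. w j \<ge> 0" "(\<Sum>j\<in>UNIV. w j) = 1"
  shows "(\<Sum>j\<in>UNIV. w j * t j)\<^sup>2 \<le> (\<Sum>j\<in>UNIV. w j * (t j)\<^sup>2)"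
proof -
  have CS: "(\<Sum>j\<in>UNIV. sqrt (w j) * (sqrt (w j) * t j))\<^sup>2 \<le> (\<Sum>j\<in>UNIV. (sqrt (w j))\<^sup>2) * (\<Sum>j\<in>UNIV. (sqrt (w j) * t j)\<^sup>2)"
    by (rule Cauchy_Schwarz_ineq_sum)
  have s1: "sqrt (w j) * sqrt (w j) = w j" for j using assms(1)[of j] by simp
  have e1: "(\<Sum>j\<in>UNIV. sqrt (w j) * (sqrt (w j) * t j)) = (\<Sum>j\<in>UNIV. w j * t j)"
    by (rule sum.cong) (use assms(1) in \<open>simp_all add: mult.assoc[symmetric] s1 abs_of_nonneg\<close>)
  have e2: "(\<Sum>j\<in>UNIV. (sqrt (w j))\<^sup>2) = 1"
    using assms by (simp add: power2_eq_square s1)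
  have e3: "(\<Sum>j\<in>UNIV. (sqrt (w j) * t j)\<^sup>2) = (\<Sum>j\<in>UNIV. w j * (t j)\<^sup>2)"
    by (rule sum.cong) (use assms(1) in \<open>simp_all add: power_mult_distrib power2_eq_square s1 abs_of_nonneg\<close>)
  show ?thesis using CS unfolding e1 e2 e3 by simp
qed

lemma bmul_contr:
  fixes A :: "real^'n^'n" and v :: "('a::real_normed_vector)^'n"
  assumes "dstoch A"
  shows "norm (bmul A v) \<le> norm v"
proof -
  have nn: "\<And>i j. A $ i $ j \<ge> 0" and rs: "\<And>i. (\<Sum>j\<in>UNIV. A $ i $ j) = 1"
    and cs: "\<And>j. (\<Sum>i\<in>UNIV. A $ i $ j) = 1" using assms by (auto simp: dstoch_def)
  have r1: "norm (bmul A v $ i) \<le> (\<Sum>j\<in>UNIV. A $ i $ j * norm (v $ j))" for i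
  proof -
    have "norm (bmul A v $ i) = norm (\<Sum>j\<in>UNIV. (A $ i $ j) *\<^sub>R (v $ j))" by (simp add: bmul_def)
    also have "\<dots> \<le> (\<Sum>j\<in>UNIV. norm ((A $ i $ j) *\<^sub>R (v $ j)))" by (rule norm_sum)
    also have "\<dots> = (\<Sum>j\<in>UNIV. A $ i $ j * norm (v $ j))" using nn by simp
    finally show ?thesis .
  qed
  have r2: "(norm (bmul A v $ i))\<^sup>2 \<le> (\<Sum>j\<in>UNIV. A $ i $ j * (norm (v $ j))\<^sup>2)" for i
  proof -
    have "(norm (bmul A v $ i))\<^sup>2 \<le> (\<Sum>j\<in>UNIV. A $ i $ j * norm (v $ j))\<^sup>2"
      by (rule power_mono[OF r1[of i]]) simp
    also have "\<dots> \<le> (\<Sum>j\<in>UNIV. A $ i $ j * (norm (v $ j))\<^sup>2)"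
      by (rule jensen_w) (use nn rs in auto)
    finally show ?thesis .
  qed
  have "(norm (bmul A v))\<^sup>2 \<le> (\<Sum>i\<in>UNIV. \<Sum>j\<in>UNIV. A $ i $ j * (norm (v $ j))\<^sup>2)"
    unfolding norm_sq_vec by (rule sum_mono) (rule r2)
  also have "\<dots> = (\<Sum>j\<in>UNIV. (\<Sum>i\<in>UNIV. A $ i $ j) * (norm (v $ j))\<^sup>2)"
    by (subst sum.swap) (simp add: sum_distrib_right)
  also have "\<dots> = (norm v)\<^sup>2" using cs by (simp add: norm_sq_vec)
  finally show ?thesis by (rule power2_le_imp_le) simp
qed

lemma dstoch_matpow:
  assumes "mixing_matrix W" shows "dstoch (matpow W k)"
proof (induction k)
  case 0
  have "(\<Sum>j\<in>UNIV. (if i = j then 1 else 0::real)) = 1" for i::'a by simp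
  moreover have "(\<Sum>j\<in>UNIV. (if j = i then 1 else 0::real)) = 1" for i::'a by simp
  ultimately show ?case by (simp add: dstoch_def mat_def)
next
  case (Suc k)
  let ?P = "matpow W k"
  have nn: "\<And>i j. ?P $ i $ j \<ge> 0" and rs: "\<And>i. (\<Sum>j\<in>UNIV. ?P $ i $ j) = 1"
    and cs: "\<And>j. (\<Sum>i\<in>UNIV. ?P $ i $ j) = 1" using Suc by (auto simp: dstoch_def)
  have wn: "\<And>i j. W $ i $ j \<ge> 0" and wr: "\<And>i. (\<Sum>j\<in>UNIV. W $ i $ j) = 1"
    and ws: "\<And>i j. W $ i $ j = W $ j $ i" using assms by (auto simp: mixing_matrix_def)
  have wc: "(\<Sum>i\<in>UNIV. W $ i $ j) = 1" for j using wr[of j] ws by simp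
  have "(?P ** W) $ i $ j \<ge> 0" for i j
    by (simp add: matrix_matrix_mult_def sum_nonneg nn wn)
  moreover have "(\<Sum>j\<in>UNIV. (?P ** W) $ i $ j) = 1" for i
    apply (simp add: matrix_matrix_mult_def)
    apply (subst sum.swap) by (simp add: sum_distrib_left[symmetric] wr rs)
  moreover have "(\<Sum>i\<in>UNIV. (?P ** W) $ i $ j) = 1" for j
    apply (simp add: matrix_matrix_mult_def)
    apply (subst sum.swap) by (simp add: sum_distrib_right[symmetric] wc cs)
  ultimately show ?case by (simp add: dstoch_def)
qed

lemma bmul_diff: "bmul A (x - y) = bmul A x - bmul A (y::('a::real_vector)^'n)"
  by (simp add: bmul_def vec_eq_iff scaleR_diff_right sum_subtractf)
lemma bmul_add: "bmul A (x + y) = bmul A x + bmul A (y::('a::real_vector)^'n)"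
  by (simp add: bmul_def vec_eq_iff scaleR_add_right sum.distrib)
lemma bmul_scale: "bmul A (a *\<^sub>R y) = a *\<^sub>R bmul A (y::('a::real_vector)^'n)"
  by (simp add: bmul_def vec_eq_iff scaleR_sum_right mult.commute)

lemma bmul_Winf: assumes "dstoch A" shows "bmul A (Winf x) = Winf (x::('a::real_vector)^'n)"
  using assms by (simp add: bmul_def Winf_def vec_eq_iff dstoch_def scaleR_sum_left[symmetric])

lemma avg_bmul: assumes "dstoch A" shows "avg (bmul A x) = avg (x::('a::real_vector)^'n)"
proof -
  have "(\<Sum>i\<in>UNIV. bmul A x $ i) = (\<Sum>j\<in>UNIV. (\<Sum>i\<in>UNIV. A $ i $ j) *\<^sub>R x $ j)"
    by (simp add: bmul_def scaleR_sum_left) (rule sum.swap)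
  then show ?thesis using assms by (simp add: avg_def dstoch_def)
qed

lemma avg_add: "avg (x + y) = avg x + avg (y::('a::real_vector)^'n)"
  by (simp add: avg_def sum.distrib scaleR_add_right)
lemma avg_diff: "avg (x - y) = avg x - avg (y::('a::real_vector)^'n)"
  by (simp add: avg_def sum_subtractf scaleR_diff_right)

lemma norm_Winf: "norm (Winf (x::('a::real_normed_vector)^'n)) = sqrt (real CARD('n)) * norm (avg x)"
proof -
  have "(norm (Winf x))\<^sup>2 = real CARD('n) * (norm (avg x))\<^sup>2"
    by (simp add: norm_sq_vec Winf_def)
  then show ?thesis
    by (metis norm_ge_zero real_sqrt_abs real_sqrt_mult abs_norm_cancel)
qed

lemma sum_dev_le:
  fixes x :: "('a::real_normed_vector)^'n"
  shows "(\<Sum>i\<in>UNIV. norm (x $ i - avg x)) \<le> sqrt (real CARD('n)) * norm (x - Winf x)"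
proof -
  have "(\<Sum>i\<in>UNIV. norm (x $ i - avg x))\<^sup>2 \<le> (\<Sum>i\<in>UNIV. (norm (x $ i - avg x))\<^sup>2) * card (UNIV::'n set)"
    by (rule sum_squared_le_sum_of_squares)
  also have "\<dots> = (norm (x - Winf x))\<^sup>2 * card (UNIV::'n set)"
  proof -
    have "(norm (x - Winf x))\<^sup>2 = (\<Sum>i\<in>UNIV. (norm ((x - Winf x) $ i))\<^sup>2)" by (rule norm_sq_vec)
    also have "\<dots> = (\<Sum>i\<in>UNIV. (norm (x $ i - avg x))\<^sup>2)" by (simp add: Winf_def)
    finally show ?thesis by simp
  qed
  also have "\<dots> = (sqrt (real CARD('n)) * norm (x - Winf x))\<^sup>2"
    by (simp add: power_mult_distrib)
  finally show ?thesis
    by (rule power2_le_imp_le) simp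
qed

lemma loewner_inv:
  fixes A :: "real^'d^'d"
  assumes "loewner_le (M1 *\<^sub>R mat 1) A" "M1 > 0"
  shows "M1 * norm v \<le> norm (A *v v)"
proof (cases "v = 0")
  case True then show ?thesis by simp
next
  case False
  have "M1 * (norm v)\<^sup>2 = v \<bullet> ((M1 *\<^sub>R mat 1) *v v)"
    by (simp add: scaleR_matrix_vector_assoc[symmetric] power2_norm_eq_inner)
  also have "\<dots> \<le> v \<bullet> (A *v v)" using assms(1) by (simp add: loewner_le_def)
  also have "\<dots> \<le> norm v * norm (A *v v)" by (rule norm_cauchy_schwarz)
  finally have "norm v * (M1 * norm v) \<le> norm v * norm (A *v v)"
    by (simp add: power2_eq_square mult_ac)
  then show ?thesis using False by simp
qed

lemma stack_inv:
  fixes d b :: "real^'d^'n"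
  assumes "\<And>i. M1 * norm (d $ i) \<le> norm (b $ i)" "M1 > 0"
  shows "M1 * norm d \<le> norm b"
proof -
  have "(M1 * norm d)\<^sup>2 = (\<Sum>i\<in>UNIV. (M1 * norm (d $ i))\<^sup>2)"
    by (simp add: power_mult_distrib norm_sq_vec sum_distrib_left)
  also have "\<dots> \<le> (\<Sum>i\<in>UNIV. (norm (b $ i))\<^sup>2)"
    by (rule sum_mono, rule power_mono) (use assms in auto)
  also have "\<dots> = (norm b)\<^sup>2" by (simp add: norm_sq_vec)
  finally show ?thesis by (rule power2_le_imp_le) simp
qed

theorem lemma2:
  fixes W :: "real^'n^'n"
    and f :: "'n \<Rightarrow> real^'d \<Rightarrow> real"
    and grad :: "'n \<Rightarrow> real^'d \<Rightarrow> real^'d"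
    and hess :: "'n \<Rightarrow> real^'d \<Rightarrow> real^'d^'d"
    and L1 L2 mu :: real and xstar :: "real^'d"
    and Q :: "real^'d^'d \<Rightarrow> real^'d^'d" and delta :: real
    and alpha gamma M :: real and m :: nat and c :: "nat \<Rightarrow> real"
    and x g d r :: "nat \<Rightarrow> real^'d^'n"
    and E Ht H :: "nat \<Rightarrow> real^'d^'d^'n"
    and u1 u2 u2t C M1 M2 :: real
  assumes W: "mixing_matrix W"
    and sigma_lt: "onorm (\<lambda>v. (W - Jmat) *v v) < 1"
    and f_deriv: "\<And>i y. (f i has_derivative (\<lambda>h. grad i y \<bullet> h)) (at y)"
    and grad_deriv: "\<And>i y. (grad i has_derivative (\<lambda>h. hess i y *v h)) (at y)"
    and hess_cont: "\<And>i. continuous_on UNIV (hess i)"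
    and L1_lip: "\<And>i y z. norm (grad i y - grad i z) \<le> L1 * norm (y - z)"
    and L2_lip: "\<And>i y z. onorm (\<lambda>v. (hess i y - hess i z) *v v) \<le> L2 * norm (y - z)"
    and mu_pos: "mu > 0"
    and strong: "\<And>y v. v \<bullet> (((1 / real CARD('n)) *\<^sub>R (\<Sum>i\<in>UNIV. hess i y)) *v v) \<ge> mu * (norm v)\<^sup>2"
    and xstar_min: "\<And>y. (1 / real CARD('n)) * (\<Sum>i\<in>UNIV. f i xstar) \<le> (1 / real CARD('n)) * (\<Sum>i\<in>UNIV. f i y)"
    and delta: "0 < delta" "delta \<le> 1"
    and Q_contr: "\<And>A. norm (Q A - A) \<le> (1 - delta) * norm A"
    and alpha_pos: "alpha > 0" and gamma_pos: "gamma > 0" and m_pos: "m \<ge> 1" and M_nonneg: "M \<ge> 0"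
    and c_range: "\<And>k. 0 \<le> c k \<and> c k \<le> 1"
    and g0: "g 0 = (\<chi> i. grad i (x 0 $ i))"
    and H0: "H 0 = (\<chi> i. hess i (x 0 $ i))"
    and x_step: "\<And>k. x (Suc k) = bmul (matpow W m) (x k - alpha *\<^sub>R d k)"
    and g_step: "\<And>k. g (Suc k) = bmul (matpow W m)
                   (g k + (\<chi> i. grad i (x (Suc k) $ i)) - (\<chi> i. grad i (x k $ i)))"
    and E_step: "\<And>k. E (Suc k) = (\<chi> i. E k $ i + H k $ i - Ht k $ i - Q (E k $ i + H k $ i - Ht k $ i))"
    and Ht_step: "\<And>k. Ht (Suc k) = (\<chi> i. Ht k $ i + Q (H k $ i - Ht k $ i))"
    and H_step: "\<And>k. H (Suc k) =
                   (let Hh = (\<chi> i. Ht k $ i + Q (E k $ i + H k $ i - Ht k $ i))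
                    in H k - gamma *\<^sub>R (Hh - bmul W Hh)
                       + (\<chi> i. hess i (x (Suc k) $ i)) - (\<chi> i. hess i (x k $ i)))"
    and d_eq: "\<And>k i. (H k $ i + M *\<^sub>R mat 1) *v (d k $ i) = g k $ i + r k $ i"
    and r_bound: "\<And>k. norm (r k) \<le> c k * norm (g k)"
    and u1_def: "u1 = (let \<sigma> = onorm (\<lambda>v. (W - Jmat) *v v) in
                   (norm (x 0 - Winf (x 0)))\<^sup>2
                   + (1 - \<sigma>\<^sup>2)\<^sup>2 / (50 * L1\<^sup>2) * (norm (g 0 - Winf (g 0)))\<^sup>2
                   + 2 * \<sigma> ^ (m - 1) * real CARD('n) / L1 *
                     ((1 / real CARD('n)) * (\<Sum>i\<in>UNIV. f i (avg (x 0)))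
                      - (1 / real CARD('n)) * (\<Sum>i\<in>UNIV. f i xstar)))"
    and u2_def: "u2 = (let \<sigma> = onorm (\<lambda>v. (W - Jmat) *v v) in
                   delta * (1 - \<sigma>) / (8 * (1 - delta)) * norm (E 0)
                   + (1 - \<sigma>) / 4 * norm (H 0 - Ht 0) + norm (H 0 - Winf (H 0)))"
    and C_def: "C = (let \<sigma> = onorm (\<lambda>v. (W - Jmat) *v v) in
                   (15 / 4) * L2 * sqrt (u1 / \<sigma> ^ (m - 1))
                   / (sqrt (1 - mu * alpha / (2 * M2)) - (1 - gamma * (1 - \<sigma>) / 2)))"
    and u2t_def: "u2t = max (u2 - C) C"
    and M1_def: "M1 = mu + M - L2 * sqrt (u1 / real CARD('n)) - u2t"
    and M2_def: "M2 = L1 + M + L2 * sqrt (u1 / real CARD('n)) + u2t"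
    and M12: "M2 \<ge> M1" "M1 > 0"
  shows "(\<forall>k. norm (g k) \<le> norm (g k - Winf (g k)) + L1 * norm (x k - Winf (x k))
                 + sqrt (real CARD('n)) * norm ((1 / real CARD('n)) *\<^sub>R (\<Sum>i\<in>UNIV. grad i (avg (x k)))))
       \<and> (\<forall>k0. (\<forall>i. loewner_le (M1 *\<^sub>R mat 1) (H k0 $ i + M *\<^sub>R mat 1)
                   \<and> loewner_le (H k0 $ i + M *\<^sub>R mat 1) (M2 *\<^sub>R mat 1)) \<longrightarrow>
            norm (x (Suc k0) - x k0)
              \<le> (2 + 2 * alpha * L1 / M1) * norm (x k0 - Winf (x k0))
                + 2 * alpha / M1 * norm (g k0 - Winf (g k0))
                + 2 * alpha * sqrt (real CARD('n)) / M1
                  * norm ((1 / real CARD('n)) *\<^sub>R (\<Sum>i\<in>UNIV. grad i (avg (x k0)))))"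
proof -
  define n where "n = real CARD('n)"
  have npos: "n > 0" unfolding n_def by simp
  define G where "G k = (\<chi> i. grad i (x k $ i))" for k
  define P where "P = matpow W m"
  have dP: "dstoch P" unfolding P_def using W by (rule dstoch_matpow)
  have avg_g: "avg (g k) = avg (G k)" for k
  proof (induction k)
    case 0 then show ?case by (simp add: g0 G_def)
  next
    case (Suc k)
    have "avg (g (Suc k)) = avg (g k + G (Suc k) - G k)"
      unfolding g_step avg_bmul[OF dP[unfolded P_def]] G_def ..
    also have "\<dots> = avg (G (Suc k))" by (simp add: avg_add avg_diff Suc)
    finally show ?case .
  qed
  obtain e :: "real^'d" where e: "norm e = 1"
    using vector_choose_size[of 1] by auto
  have "0 \<le> norm (grad undefined e - grad undefined 0)" by simp
  also have "\<dots> \<le> L1 * norm (e - 0)" by (rule L1_lip)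
  finally have L1nn: "L1 \<ge> 0" using e by simp
  define gF where "gF k = norm ((1 / real CARD('n)) *\<^sub>R (\<Sum>i\<in>UNIV. grad i (avg (x k))))" for k
  have part1: "norm (g k) \<le> norm (g k - Winf (g k)) + L1 * norm (x k - Winf (x k)) + sqrt n * gF k" for k
  proof -
    let ?xb = "avg (x k)"
    have "norm (g k) \<le> norm (g k - Winf (g k)) + norm (Winf (g k))"
      using norm_triangle_ineq[of "g k - Winf (g k)" "Winf (g k)"] by simp
    moreover have "norm (Winf (g k)) = sqrt n * norm (avg (G k))"
      unfolding norm_Winf n_def avg_g ..
    moreover have "norm (avg (G k)) \<le> L1 * norm (x k - Winf (x k)) / sqrt n + gF k"
    proof -
      have "avg (G k) = (1 / n) *\<^sub>R (\<Sum>i\<in>UNIV. grad i (x k $ i) - grad i ?xb)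
                        + (1 / n) *\<^sub>R (\<Sum>i\<in>UNIV. grad i ?xb)" (is "_ = ?A + ?B")
        by (simp add: avg_def G_def n_def sum_subtractf scaleR_diff_right)
      hence "norm (avg (G k)) \<le> norm ((1 / n) *\<^sub>R (\<Sum>i\<in>UNIV. grad i (x k $ i) - grad i ?xb)) + norm ((1 / n) *\<^sub>R (\<Sum>i\<in>UNIV. grad i ?xb))"
        using norm_triangle_ineq[of ?A ?B] by simp
      moreover have "norm ((1 / n) *\<^sub>R (\<Sum>i\<in>UNIV. grad i ?xb)) = gF k" by (simp add: gF_def n_def)
      ultimately have "norm (avg (G k)) \<le> norm ((1 / n) *\<^sub>R (\<Sum>i\<in>UNIV. grad i (x k $ i) - grad i ?xb)) + gF k"
        by simp
      moreover have "norm ((1 / n) *\<^sub>R (\<Sum>i\<in>UNIV. grad i (x k $ i) - grad i ?xb))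
           \<le> (1 / n) * (\<Sum>i\<in>UNIV. L1 * norm (x k $ i - ?xb))"
      proof -
        have "norm (\<Sum>i\<in>UNIV. grad i (x k $ i) - grad i ?xb) \<le> (\<Sum>i\<in>UNIV. norm (grad i (x k $ i) - grad i ?xb))"
          by (rule norm_sum)
        also have "\<dots> \<le> (\<Sum>i\<in>UNIV. L1 * norm (x k $ i - ?xb))"
          by (rule sum_mono) (rule L1_lip)
        finally show ?thesis using npos by (simp add: divide_simps)
      qed
      moreover have "(1 / n) * (\<Sum>i\<in>UNIV. L1 * norm (x k $ i - ?xb)) \<le> L1 * norm (x k - Winf (x k)) / sqrt n"
      proof -
        have "(\<Sum>i\<in>UNIV. L1 * norm (x k $ i - ?xb)) \<le> L1 * (sqrt n * norm (x k - Winf (x k)))"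
          unfolding sum_distrib_left[symmetric] n_def
          by (rule mult_left_mono[OF sum_dev_le L1nn])
        then have S: "(\<Sum>i\<in>UNIV. L1 * norm (x k $ i - ?xb)) \<le> L1 * (sqrt n * norm (x k - Winf (x k)))" .
        have "sqrt n * sqrt n = n" using npos by simp
        have sp: "sqrt n > 0" using npos by simp
        have "(1/n) * (\<Sum>i\<in>UNIV. L1 * norm (x k $ i - ?xb)) \<le> (1/n) * (L1 * (sqrt n * norm (x k - Winf (x k))))"
          by (rule mult_left_mono[OF S]) (use npos in simp)
        also have "\<dots> = (1/(sqrt n * sqrt n)) * (L1 * (sqrt n * norm (x k - Winf (x k))))"
          using \<open>sqrt n * sqrt n = n\<close> by simp
        also have "\<dots> = L1 * norm (x k - Winf (x k)) / sqrt n"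
          using sp by (simp add: field_simps)
        finally show ?thesis .
      qed
      ultimately show ?thesis by linarith
    qed
    ultimately have "norm (g k) \<le> norm (g k - Winf (g k)) + sqrt n * (L1 * norm (x k - Winf (x k)) / sqrt n + gF k)"
      using npos by (smt (verit) mult_left_mono real_sqrt_ge_zero)
    also have "\<dots> = norm (g k - Winf (g k)) + L1 * norm (x k - Winf (x k)) + sqrt n * gF k"
      using npos by (simp add: field_simps)
    finally show ?thesis .
  qed
  show ?thesis
  proof (intro conjI allI impI)
    fix k show "norm (g k) \<le> norm (g k - Winf (g k)) + L1 * norm (x k - Winf (x k))
                 + sqrt (real CARD('n)) * norm ((1 / real CARD('n)) *\<^sub>R (\<Sum>i\<in>UNIV. grad i (avg (x k))))"
      using part1[of k] by (simp add: gF_def n_def)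
  next
    fix k0
    assume hyp: "\<forall>i. loewner_le (M1 *\<^sub>R mat 1) (H k0 $ i + M *\<^sub>R mat 1)
                   \<and> loewner_le (H k0 $ i + M *\<^sub>R mat 1) (M2 *\<^sub>R mat 1)"
    have m1: "M1 > 0" using M12 by simp
    have dbound: "M1 * norm (d k0) \<le> 2 * norm (g k0)"
    proof -
      have "M1 * norm (d k0) \<le> norm (g k0 + r k0)"
      proof (rule stack_inv[OF _ m1])
        fix i
        have "M1 * norm (d k0 $ i) \<le> norm ((H k0 $ i + M *\<^sub>R mat 1) *v (d k0 $ i))"
          using hyp m1 loewner_inv by blast
        then show "M1 * norm (d k0 $ i) \<le> norm ((g k0 + r k0) $ i)" by (simp add: d_eq)
      qed
      also have "\<dots> \<le> norm (g k0) + norm (r k0)" by (rule norm_triangle_ineq)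
      also have "\<dots> \<le> 2 * norm (g k0)"
      proof -
        have "c k0 * norm (g k0) \<le> norm (g k0)"
          using c_range[of k0] by (intro mult_left_le_one_le) auto
        then show ?thesis using r_bound[of k0] by linarith
      qed
      finally show ?thesis .
    qed
    define y where "y = x k0 - Winf (x k0)"
    have xs: "x (Suc k0) = bmul P (x k0) - alpha *\<^sub>R bmul P (d k0)"
      unfolding x_step P_def[symmetric] bmul_diff bmul_scale ..
    have bx: "bmul P (x k0) = Winf (x k0) + bmul P y"
      using bmul_add[of P "Winf (x k0)" y] bmul_Winf[OF dP, of "x k0"] unfolding y_def by simp
    have xk: "x k0 = Winf (x k0) + y" unfolding y_def by simp
    have gen: "\<And>a w b c xx yy :: real^'d^'n. a = w + b - c \<Longrightarrow> xx = w + yy \<Longrightarrow> a - xx = (b - yy) - c"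
      by (simp add: algebra_simps)
    have eqd: "x (Suc k0) - x k0 = (bmul P y - y) - alpha *\<^sub>R bmul P (d k0)"
      by (rule gen[OF _ xk]) (simp add: xs bx)
    have "norm (x (Suc k0) - x k0) \<le> norm (bmul P y - y) + norm (alpha *\<^sub>R bmul P (d k0))"
      unfolding eqd by (rule norm_triangle_ineq4)
    moreover have "norm (bmul P y - y) \<le> norm (bmul P y) + norm y" by (rule norm_triangle_ineq4)
    moreover have "norm (alpha *\<^sub>R bmul P (d k0)) = alpha * norm (bmul P (d k0))" using alpha_pos by simp
    ultimately have "norm (x (Suc k0) - x k0) \<le> norm (bmul P y) + norm y + alpha * norm (bmul P (d k0))"
      by linarith
    also have "\<dots> \<le> 2 * norm y + alpha * norm (d k0)"
    proof -
      have "alpha * norm (bmul P (d k0)) \<le> alpha * norm (d k0)"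
        by (rule mult_left_mono[OF bmul_contr[OF dP]]) (use alpha_pos in simp)
      then show ?thesis using bmul_contr[OF dP, of y] by linarith
    qed
    also have "\<dots> \<le> 2 * norm y + 2 * alpha / M1 * norm (g k0)"
    proof -
      have "norm (d k0) \<le> (2 * norm (g k0)) / M1"
        using dbound m1 by (simp add: pos_le_divide_eq mult.commute)
      then have "alpha * norm (d k0) \<le> alpha * ((2 * norm (g k0)) / M1)"
        by (rule mult_left_mono) (use alpha_pos in simp)
      also have "\<dots> = 2 * alpha / M1 * norm (g k0)" by simp
      finally show ?thesis by linarith
    qed
    also have "\<dots> \<le> 2 * norm y + 2 * alpha / M1 * (norm (g k0 - Winf (g k0)) + L1 * norm y + sqrt n * gF k0)"
    proof -
      have "2*alpha/M1 * norm (g k0) \<le> 2*alpha/M1 * (norm (g k0 - Winf (g k0)) + L1 * norm y + sqrt n * gF k0)"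
        unfolding y_def by (rule mult_left_mono[OF part1]) (use alpha_pos m1 in simp)
      then show ?thesis by linarith
    qed
    also have "\<dots> = (2 + 2 * alpha * L1 / M1) * norm y + 2 * alpha / M1 * norm (g k0 - Winf (g k0))
                + 2 * alpha * sqrt n / M1 * gF k0"
      using m1 by (simp add: field_simps)
    finally have fin: "norm (x (Suc k0) - x k0) \<le> (2 + 2 * alpha * L1 / M1) * norm y + 2 * alpha / M1 * norm (g k0 - Winf (g k0))
                + 2 * alpha * sqrt n / M1 * gF k0" .
    then show "norm (x (Suc k0) - x k0)
              \<le> (2 + 2 * alpha * L1 / M1) * norm (x k0 - Winf (x k0))
                + 2 * alpha / M1 * norm (g k0 - Winf (g k0))
                + 2 * alpha * sqrt (real CARD('n)) / M1
                  * norm ((1 / real CARD('n)) *\<^sub>R (\<Sum>i\<in>UNIV. grad i (avg (x k0))))"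
      unfolding y_def n_def gF_def .
  qed
qed

end
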